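(* Let $\mathcal{I}_1\sqcup\cdots\sqcup\mathcal{I}_K=[N]$ be a partition of the modes into nonempty cells, let $\sigma_n$ denote the index of the cell containing mode $n$, let $\tilde I_1,\dots,\tilde I_K$ be positive integers and $I_n=\tilde I_{\sigma_n}$. Let $\mathbf{A}_k\in\mathbb{R}^{\tilde I_k\times r}$ for $k\in[K]$. If $\mathcal{Y}\in\mathbb{R}^{I_1\times\cdots\times I_N}$ is symmetric with respect to the partition $\mathcal{I}_1\sqcup\cdots\sqcup\mathcal{I}_K$, then for every $k\in[K]$ and all $u,v\in\mathcal{I}_k$, $$\mathbf{Y}_{(u)}\Big(\textstyle\bigodot_{j\neq u}\mathbf{A}_{\sigma_j}\Big) = \mathbf{Y}_{(v)}\Big(\textstyle\bigodot_{j\neq v}\mathbf{A}_{\sigma_j}\Big),$$ where $\bigodot_{j\neq t}\mathbf{A}_{\sigma_j} = \mathbf{A}_{\sigma_N}\odot\cdots\odot\mathbf{A}_{\sigma_{t+1}}\odot\mathbf{A}_{\sigma_{t-1}}\odot\cdots\odot\mathbf{A}_{\sigma_1}$.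
   Context: A tensor $\mathcal{Y}\in\mathbb{R}^{I_1\times\cdots\times I_N}$ is symmetric with respect to the partition if $y_{(i_{\pi(1)},\dots,i_{\pi(N)})}=y_{(i_1,\dots,i_N)}$ for every index $(i_1,\dots,i_N)$ and every permutation $\pi$ of $[N]$ mapping each cell $\mathcal{I}_\ell$ to itself. $\odot$ is the Khatri–Rao product: $\mathbf{A}\odot\mathbf{B}$ has $j$-th column $\mathbf{A}_{:,j}\otimes\mathbf{B}_{:,j}$. The mode-$t$ matricization $\mathbf{Y}_{(t)}\in\mathbb{R}^{I_t\times\prod_{j\neq t}I_j}$ places $y_{i_1,\dots,i_N}$ in row $i_t$ and column $1+\sum_{k\neq t}(i_k-1)\prod_{m<k,\,m\neq t}I_m$. *)

theory Defs
  imports "HOL-Analysis.Analysis" "HOL-Combinatorics.Permutations"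
begin

text \<open>Conventions (0-based): modes are 0..<N, cells 0..<K, a multi-index is a function
  i :: nat => nat with i n < I n for n < N and i n = 0 for n >= N.  Matrices are functions ri => col => real
  with explicit dimensions.\<close>

definition valid_index :: "nat \<Rightarrow> (nat \<Rightarrow> nat) \<Rightarrow> (nat \<Rightarrow> nat) \<Rightarrow> bool" where
  "valid_index N I i \<longleftrightarrow> (\<forall>n<N. i n < I n) \<and> (\<forall>n\<ge>N. i n = 0)"

definition partition_symmetric ::
  "nat \<Rightarrow> (nat \<Rightarrow> nat) \<Rightarrow> (nat \<Rightarrow> nat) \<Rightarrow> ((nat \<Rightarrow> nat) \<Rightarrow> real) \<Rightarrow> bool" where
  "partition_symmetric N I \<sigma> Y \<longleftrightarrow>
     (\<forall>\<pi> i. \<pi> permutes {..<N} \<longrightarrow> (\<forall>n<N. \<sigma> (\<pi> n) = \<sigma> n) \<longrightarrow> valid_index N I i \<longrightarrow>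
        Y (\<lambda>n. i (\<pi> n)) = Y i)"

definition ncols :: "nat \<Rightarrow> (nat \<Rightarrow> nat) \<Rightarrow> nat \<Rightarrow> nat" where
  "ncols N I t = (\<Prod>j\<in>{..<N} - {t}. I j)"

definition stride :: "(nat \<Rightarrow> nat) \<Rightarrow> nat \<Rightarrow> nat \<Rightarrow> nat" where
  "stride I t k = (\<Prod>m\<in>{..<k} - {t}. I m)"

text \<open>Mode-t matricization: entry (ri, col) is y at the multi-index whose t-th entry is
  ri and whose other entries are the mixed-radix digits of col, i.e. the unique index with
  col = sum over k~=t of i_k * stride k.\<close>
definition matricize ::
  "nat \<Rightarrow> (nat \<Rightarrow> nat) \<Rightarrow> ((nat \<Rightarrow> nat) \<Rightarrow> real) \<Rightarrow> nat \<Rightarrow> nat \<Rightarrow> nat \<Rightarrow> real" where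
  "matricize N I Y t ri col =
     Y (\<lambda>k. if k = t then ri else if k < N then (col div stride I t k) mod I k else 0)"

text \<open>Khatri-Rao product of A (with p rows) and B (with q rows): ri a*q+b, column j
  holds A a j * B b j, i.e. column j is the Kronecker product of the columns.\<close>
definition khatri_rao ::
  "(nat \<Rightarrow> nat \<Rightarrow> real) \<Rightarrow> nat \<Rightarrow> (nat \<Rightarrow> nat \<Rightarrow> real) \<Rightarrow> nat \<Rightarrow> nat \<Rightarrow> nat \<Rightarrow> real" where
  "khatri_rao A p B q = (\<lambda>ri j. A (ri div q) j * B (ri mod q) j)"

text \<open>kr_skip A sigma It t n = A_{sigma_n} kr ... kr A_{sigma_1} with the factor for mode t
  omitted (0-based: factors for modes n-1,...,0), together with its number of rows.\<close>
fun kr_skip ::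
  "(nat \<Rightarrow> nat \<Rightarrow> nat \<Rightarrow> real) \<Rightarrow> (nat \<Rightarrow> nat) \<Rightarrow> (nat \<Rightarrow> nat) \<Rightarrow> nat \<Rightarrow> nat
     \<Rightarrow> (nat \<Rightarrow> nat \<Rightarrow> real) \<times> nat" where
  "kr_skip A \<sigma> It t 0 = ((\<lambda>_ _. 1), 1)"
| "kr_skip A \<sigma> It t (Suc n) =
     (let (B, q) = kr_skip A \<sigma> It t n in
      if n = t then (B, q)
      else (khatri_rao (A (\<sigma> n)) (It (\<sigma> n)) B q, It (\<sigma> n) * q))"

text \<open>Entry (ri, c) of Y_(t) times (KR_{j~=t} A_{sigma_j}).\<close>
definition mttkrp ::
  "nat \<Rightarrow> (nat \<Rightarrow> nat) \<Rightarrow> (nat \<Rightarrow> nat) \<Rightarrow> (nat \<Rightarrow> nat \<Rightarrow> nat \<Rightarrow> real)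
     \<Rightarrow> ((nat \<Rightarrow> nat) \<Rightarrow> real) \<Rightarrow> nat \<Rightarrow> nat \<Rightarrow> nat \<Rightarrow> real" where
  "mttkrp N \<sigma> It A Y t ri c =
     (\<Sum>col<ncols N (\<lambda>n. It (\<sigma> n)) t.
        matricize N (\<lambda>n. It (\<sigma> n)) Y t ri col * fst (kr_skip A \<sigma> It t N) col c)"

end

theory Submission imports Defs begin

lemma stride_Suc: "stride I t (Suc n) = (if n = t then stride I t n else stride I t n * I n)"
proof -
  have "{..<Suc n} - {t} = (if n = t then {..<n} - {t} else insert n ({..<n} - {t}))" by auto
  then show ?thesis unfolding stride_def by (auto simp: mult.commute)
qed

lemma stride_pos: "\<forall>m<n. 0 < I m \<Longrightarrow> 0 < stride I t n"
  unfolding stride_def by (auto intro: prod_pos)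

lemma stride_split: "k \<le> n \<Longrightarrow> stride I t n = stride I t k * (\<Prod>m\<in>{k..<n}-{t}. I m)"
proof -
  assume "k \<le> n"
  then have e: "{..<n} - {t} = ({..<k} - {t}) \<union> ({k..<n} - {t})" by auto
  have d: "({..<k} - {t}) \<inter> ({k..<n} - {t}) = {}" by auto
  show ?thesis unfolding stride_def e
    by (rule prod.union_disjoint) (use d in auto)
qed

lemma digit_mod:
  assumes "k < n" "k \<noteq> t"
  shows "(col mod stride I t n) div stride I t k mod I k = col div stride I t k mod I k"
proof -
  have "{k..<n} - {t} = insert k ({Suc k..<n} - {t})" using assms by auto
  then have "(\<Prod>m\<in>{k..<n}-{t}. I m) = I k * (\<Prod>m\<in>{Suc k..<n}-{t}. I m)" by simp
  then obtain M where sM: "stride I t n = stride I t k * (I k * M)"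
    using stride_split[of k n I t] assms by auto
  let ?a = "stride I t k"
  have "col mod stride I t n = ?a * (col div ?a mod (I k * M)) + col mod ?a"
    unfolding sM by (rule mod_mult2_eq)
  then have "(col mod stride I t n) div ?a = (col div ?a mod (I k * M)) + col mod ?a div ?a"
    by (cases "?a = 0") (simp_all add: div_mult_self4 )
  also have "col mod ?a div ?a = 0" by (cases "?a = 0") simp_all
  finally show ?thesis by (simp add: mod_mod_cancel)
qed

definition Dg :: "(nat \<Rightarrow> nat) \<Rightarrow> nat \<Rightarrow> nat \<Rightarrow> nat \<Rightarrow> nat \<Rightarrow> nat" where
  "Dg I t n col k = (if k < n \<and> k \<noteq> t then col div stride I t k mod I k else 0)"

definition enc :: "(nat \<Rightarrow> nat) \<Rightarrow> nat \<Rightarrow> nat \<Rightarrow> (nat \<Rightarrow> nat) \<Rightarrow> nat" where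
  "enc I t n i = (\<Sum>k\<in>{..<n}-{t}. i k * stride I t k)"

definition Bs :: "(nat \<Rightarrow> nat) \<Rightarrow> nat \<Rightarrow> nat \<Rightarrow> (nat \<Rightarrow> nat) set" where
  "Bs I t n = {i. \<forall>k. (k < n \<and> k \<noteq> t \<longrightarrow> i k < I k) \<and> (\<not> (k < n \<and> k \<noteq> t) \<longrightarrow> i k = 0)}"

lemma enc_Suc: "enc I t (Suc n) i = (if n = t then enc I t n i else enc I t n i + i n * stride I t n)"
proof -
  have "{..<Suc n} - {t} = (if n = t then {..<n} - {t} else insert n ({..<n} - {t}))" by auto
  then show ?thesis unfolding enc_def by auto
qed

lemma enc_cong: "(\<And>k. k < n \<Longrightarrow> i k = j k) \<Longrightarrow> enc I t n i = enc I t n j"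
  unfolding enc_def by (rule sum.cong) auto

lemma enc_Dg: "enc I t n (Dg I t n col) = col mod stride I t n"
proof (induction n)
  case 0
  then show ?case by (simp add: enc_def stride_def)
next
  case (Suc n)
  show ?case
  proof (cases "n = t")
    case True
    have "enc I t n (Dg I t (Suc n) col) = enc I t n (Dg I t n col)"
      by (rule enc_cong) (auto simp: Dg_def)
    then show ?thesis using True Suc by (simp add: enc_Suc stride_Suc)
  next
    case False
    have "enc I t n (Dg I t (Suc n) col) = enc I t n (Dg I t n col)"
      by (rule enc_cong) (auto simp: Dg_def)
    then have "enc I t (Suc n) (Dg I t (Suc n) col) = col mod stride I t n + (col div stride I t n mod I n) * stride I t n"
      using False Suc by (simp add: enc_Suc Dg_def)
    also have "\<dots> = col mod (stride I t n * I n)" by (simp add: mod_mult2_eq)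
    finally show ?thesis using False by (simp add: stride_Suc)
  qed
qed

lemma Dg_in: assumes "\<forall>m<n. 0 < I m" shows "Dg I t n col \<in> Bs I t n"
  unfolding Bs_def mem_Collect_eq
proof (intro allI conjI impI)
  fix k assume kk: "k < n \<and> k \<noteq> t"
  then have "0 < I k" using assms by blast
  then show "Dg I t n col k < I k" using kk by (simp add: Dg_def)
next
  fix k assume "\<not> (k < n \<and> k \<noteq> t)"
  then show "Dg I t n col k = 0" by (metis Dg_def)
qed

lemma BsD_all: "i \<in> Bs I t n \<Longrightarrow> (k < n \<and> k \<noteq> t \<longrightarrow> i k < I k) \<and> (\<not> (k < n \<and> k \<noteq> t) \<longrightarrow> i k = 0)"
  unfolding Bs_def by (drule CollectD) (erule spec)

lemma BsD: "i \<in> Bs I t n \<Longrightarrow> k < n \<Longrightarrow> k \<noteq> t \<Longrightarrow> i k < I k"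
proof -
  assume a: "i \<in> Bs I t n" and b: "k < n" and c: "k \<noteq> t"
  have "k < n \<and> k \<noteq> t" using b c by (rule conjI)
  with conjunct1[OF BsD_all[of i I t n k, OF a]] show "i k < I k" by (rule mp)
qed

lemma BsD0: "i \<in> Bs I t n \<Longrightarrow> \<not> (k < n \<and> k \<noteq> t) \<Longrightarrow> i k = 0"
proof -
  assume a: "i \<in> Bs I t n" and b: "\<not> (k < n \<and> k \<noteq> t)"
  from conjunct2[OF BsD_all[of i I t n k, OF a]] b show "i k = 0" by (rule mp)
qed

lemma Dg_eq: "k < n \<Longrightarrow> k \<noteq> t \<Longrightarrow> Dg I t n x k = x div stride I t k mod I k"
  by (simp add: Dg_def)

lemma Dg_enc: "\<forall>m<n. 0 < I m \<Longrightarrow> i \<in> Bs I t n \<Longrightarrow> enc I t n i < stride I t n \<and> Dg I t n (enc I t n i) = i"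
proof (induction n arbitrary: i)
  case 0
  then show ?case by (auto simp: enc_def stride_def Dg_def Bs_def)
next
  case (Suc n)
  let ?i = "i(n := 0)"
  have iB: "?i \<in> Bs I t n" unfolding Bs_def mem_Collect_eq
  proof (intro allI conjI impI)
    fix k assume "k < n \<and> k \<noteq> t" then show "?i k < I k" using BsD[OF Suc.prems(2), of k] by simp
  next
    fix k assume a: "\<not> (k < n \<and> k \<noteq> t)" show "?i k = 0"
    proof (cases "k = n")
      case False then have "\<not> (k < Suc n \<and> k \<noteq> t)" using a by auto
      then show ?thesis using BsD0[OF Suc.prems(2)] False by simp
    qed simp
  qed
  have e: "enc I t n ?i = enc I t n i" by (rule enc_cong) auto
  have posn: "\<forall>m<n. 0 < I m" using Suc.prems(1) by auto
  note IH0 = Suc.IH[OF posn iB]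
  have IH: "enc I t n i < stride I t n" "Dg I t n (enc I t n i) = ?i"
    using IH0 unfolding e by blast+
  show ?case
  proof (cases "n = t")
    case True
    have "Dg I t (Suc n) x = Dg I t n x" for x using True by (auto simp: Dg_def)
    moreover have "i n = 0" using True BsD0[OF Suc.prems(2), of n] by simp
    then have "?i = i" by auto
    ultimately show ?thesis using IH True by (simp add: enc_Suc stride_Suc)
  next
    case False
    let ?s = "stride I t n" and ?E = "enc I t n i"
    have spos: "0 < ?s" using posn by (rule stride_pos)
    have inI: "i n < I n" using BsD[OF Suc.prems(2), of n] False by simp
    have lt: "?E + i n * ?s < ?s * I n"
    proof -
      have "?E + i n * ?s < ?s + i n * ?s" using IH by simp
      also have "\<dots> = (Suc (i n)) * ?s" by simp
      also have "\<dots> \<le> I n * ?s" using inI by (intro mult_right_mono) auto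
      finally show ?thesis by (simp add: mult.commute)
    qed
    have "Dg I t (Suc n) (?E + i n * ?s) k = i k" for k
    proof (cases "k < n \<and> k \<noteq> t")
      case True
      have "Dg I t (Suc n) (?E + i n * ?s) k = (?E + i n * ?s) div stride I t k mod I k"
        using True by (simp only: Dg_eq[of k "Suc n" t I] less_Suc_eq simp_thms)
      also have "\<dots> = ((?E + i n * ?s) mod ?s) div stride I t k mod I k"
        using True by (intro digit_mod[of k n t "?E + i n * ?s" I, symmetric]) auto
      also have "(?E + i n * ?s) mod ?s = ?E" using IH by simp
      also have "?E div stride I t k mod I k = Dg I t n ?E k" using True by (simp add: Dg_def)
      also have "\<dots> = i k" using IH True by simp
      finally show ?thesis .
    next
      case nk: False
      show ?thesis
      proof (cases "k = n")
        case True
        have "(?E + i n * ?s) div ?s = i n" using IH spos by simp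
        then show ?thesis using True False inI by (simp add: Dg_def)
      next
        case False
        then have "\<not> (k < Suc n \<and> k \<noteq> t)" using nk by auto
        then show ?thesis using BsD0[OF Suc.prems(2)] by (metis Dg_def)
      qed
    qed
    then show ?thesis using lt False by (simp add: enc_Suc stride_Suc fun_eq_iff)
  qed
qed

lemma Dg_bij: "\<forall>m<n. 0 < I m \<Longrightarrow> bij_betw (Dg I t n) {..<stride I t n} (Bs I t n)"
  unfolding bij_betw_def
proof
  show "inj_on (Dg I t n) {..<stride I t n}"
    by (rule inj_on_inverseI[where g = "enc I t n"]) (simp add: enc_Dg)
  assume pos: "\<forall>m<n. 0 < I m"
  show "Dg I t n ` {..<stride I t n} = Bs I t n"
  proof
    show "Dg I t n ` {..<stride I t n} \<subseteq> Bs I t n" using Dg_in[OF pos] by auto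
    show "Bs I t n \<subseteq> Dg I t n ` {..<stride I t n}"
    proof
      fix i assume "i \<in> Bs I t n"
      from Dg_enc[OF pos this] show "i \<in> Dg I t n ` {..<stride I t n}"
        by (metis imageI lessThan_iff)
    qed
  qed
qed

lemma kr_skip_eq:
  assumes "\<forall>m<n. 0 < It (\<sigma> m)"
  shows "snd (kr_skip A \<sigma> It t n) = stride (\<lambda>n. It (\<sigma> n)) t n \<and>
    (\<forall>col < stride (\<lambda>n. It (\<sigma> n)) t n. fst (kr_skip A \<sigma> It t n) col c =
       (\<Prod>j\<in>{..<n}-{t}. A (\<sigma> j) (Dg (\<lambda>n. It (\<sigma> n)) t n col j) c))"
  using assms
proof (induction n)
  case 0
  then show ?case by (simp add: stride_def)
next
  case (Suc n)
  define I where "I = (\<lambda>n. It (\<sigma> n))"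
  obtain B q where Bq: "kr_skip A \<sigma> It t n = (B, q)" by (cases "kr_skip A \<sigma> It t n") auto
  have posn: "\<forall>m<n. 0 < It (\<sigma> m)" using Suc.prems by auto
  have IH: "q = stride I t n" "\<And>col. col < stride I t n \<Longrightarrow> B col c = (\<Prod>j\<in>{..<n}-{t}. A (\<sigma> j) (Dg I t n col j) c)"
    using Suc.IH[OF posn] unfolding Bq I_def by auto
  have spos: "0 < stride I t n" using posn unfolding I_def by (intro stride_pos) auto
  show ?case
  proof (cases "n = t")
    case True
    have ks: "kr_skip A \<sigma> It t (Suc n) = (B, q)" using True Bq by simp
    have sets: "{..<Suc n} - {t} = {..<n} - {t}" using True by auto
    have dg: "Dg I t (Suc t) col = Dg I t t col" for col by (auto simp add: Dg_def fun_eq_iff)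
    show ?thesis unfolding ks I_def[symmetric] sets using IH True
      by (simp add: stride_Suc dg cong: prod.cong)
  next
    case False
    have ks: "kr_skip A \<sigma> It t (Suc n) = (khatri_rao (A (\<sigma> n)) (It (\<sigma> n)) B q, It (\<sigma> n) * q)"
      using False Bq by simp
    have sets: "{..<Suc n} - {t} = insert n ({..<n} - {t})" using False by auto
    have ss: "stride I t (Suc n) = stride I t n * I n" using False by (simp add: stride_Suc)
    have "fst (kr_skip A \<sigma> It t (Suc n)) col c =
       (\<Prod>j\<in>{..<Suc n}-{t}. A (\<sigma> j) (Dg I t (Suc n) col j) c)" if col: "col < stride I t (Suc n)" for col
    proof -
      have m: "col mod q < stride I t n" using IH(1) spos by simp
      have d1: "Dg I t n (col mod q) j = Dg I t (Suc n) col j" if "j \<in> {..<n} - {t}" for j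
      proof -
        have jj: "j < n" "j \<noteq> t" using that by auto
        have "Dg I t n (col mod q) j = (col mod stride I t n) div stride I t j mod I j"
          using jj IH(1) by (simp add: Dg_def)
        also have "\<dots> = col div stride I t j mod I j" by (rule digit_mod[OF jj])
        also have "\<dots> = Dg I t (Suc n) col j" using jj by (simp add: Dg_def)
        finally show ?thesis .
      qed
      have d2: "col div q = Dg I t (Suc n) col n"
      proof -
        have "col div q < I n" using col ss IH(1) spos
          by (simp add: div_less_iff_less_mult mult.commute)
        then show ?thesis using False IH(1) by (simp add: Dg_def)
      qed
      have "fst (kr_skip A \<sigma> It t (Suc n)) col c = A (\<sigma> n) (col div q) c * B (col mod q) c"
        unfolding ks by (simp add: khatri_rao_def)
      also have "\<dots> = A (\<sigma> n) (Dg I t (Suc n) col n) c * (\<Prod>j\<in>{..<n}-{t}. A (\<sigma> j) (Dg I t (Suc n) col j) c)"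
      proof -
        have pc: "(\<Prod>j\<in>{..<n}-{t}. A (\<sigma> j) (Dg I t n (col mod q) j) c) = (\<Prod>j\<in>{..<n}-{t}. A (\<sigma> j) (Dg I t (Suc n) col j) c)"
          by (rule prod.cong) (simp_all only: d1)
        show ?thesis using IH(2)[OF m] d2 pc by simp
      qed
      also have "\<dots> = (\<Prod>j\<in>{..<Suc n}-{t}. A (\<sigma> j) (Dg I t (Suc n) col j) c)"
        unfolding sets by simp
      finally show ?thesis .
    qed
    moreover have "snd (kr_skip A \<sigma> It t (Suc n)) = stride I t (Suc n)"
      unfolding ks ss IH(1) by (simp add: I_def)
    ultimately show ?thesis unfolding I_def by auto
  qed
qed

definition Vs :: "nat \<Rightarrow> (nat \<Rightarrow> nat) \<Rightarrow> nat \<Rightarrow> nat \<Rightarrow> (nat \<Rightarrow> nat) set" where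
  "Vs N I t ri = {i. valid_index N I i \<and> i t = ri}"

lemma upd_bij:
  assumes t: "t < N" and ri: "ri < I t"
  shows "bij_betw (\<lambda>i. i(t := ri)) (Bs I t N) (Vs N I t ri)"
proof (rule bij_betw_byWitness[where f' = "\<lambda>i. i(t := 0)"])
  show "\<forall>a\<in>Bs I t N. (a(t := ri))(t := 0) = a"
  proof
    fix a assume a: "a \<in> Bs I t N"
    have "a t = 0" using BsD0[OF a, of t] by simp
    then show "(a(t := ri))(t := 0) = a" by auto
  qed
  show "\<forall>a'\<in>Vs N I t ri. (a'(t := 0))(t := ri) = a'"
    unfolding Vs_def by auto
  show "(\<lambda>i. i(t := ri)) ` Bs I t N \<subseteq> Vs N I t ri"
  proof
    fix x assume "x \<in> (\<lambda>i. i(t := ri)) ` Bs I t N"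
    then obtain a where a: "a \<in> Bs I t N" and x: "x = a(t := ri)" by blast
    have "valid_index N I x" unfolding valid_index_def
    proof (intro conjI allI impI)
      fix n assume n: "n < N"
      show "x n < I n"
      proof (cases "n = t")
        case True then show ?thesis using x ri by simp
      next
        case False then show ?thesis using x BsD[OF a n False] by simp
      qed
    next
      fix n assume n: "N \<le> n"
      then have "\<not> (n < N \<and> n \<noteq> t)" by simp
      then have "a n = 0" by (rule BsD0[OF a])
      then show "x n = 0" using x n t by simp
    qed
    then show "x \<in> Vs N I t ri" unfolding Vs_def using x by simp
  qed
  show "(\<lambda>i. i(t := 0)) ` Vs N I t ri \<subseteq> Bs I t N"
  proof
    fix x assume "x \<in> (\<lambda>i. i(t := 0)) ` Vs N I t ri"
    then obtain a where a: "valid_index N I a" and x: "x = a(t := 0)" unfolding Vs_def by blast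
    show "x \<in> Bs I t N" unfolding Bs_def mem_Collect_eq
    proof (intro allI conjI impI)
      fix k assume "k < N \<and> k \<noteq> t"
      then show "x k < I k" using a x unfolding valid_index_def by simp
    next
      fix k assume k: "\<not> (k < N \<and> k \<noteq> t)"
      show "x k = 0"
      proof (cases "k = t")
        case False
        then have "N \<le> k" using k by simp
        then show ?thesis using a x False unfolding valid_index_def by simp
      qed (use x in simp)
    qed
  qed
qed

lemma mttkrp_eq:
  assumes t: "t < N" and ri: "ri < It (\<sigma> t)" and pos: "\<forall>m<N. 0 < It (\<sigma> m)"
  shows "mttkrp N \<sigma> It A Y t ri c =
    (\<Sum>i\<in>Vs N (\<lambda>n. It (\<sigma> n)) t ri. Y i * (\<Prod>j\<in>{..<N}-{t}. A (\<sigma> j) (i j) c))"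
proof -
  define I where "I = (\<lambda>n. It (\<sigma> n))"
  define g where "g = (\<lambda>i. Y i * (\<Prod>j\<in>{..<N}-{t}. A (\<sigma> j) (i j) c))"
  define h where "h = (\<lambda>col. (Dg I t N col)(t := ri))"
  have posI: "\<forall>m<N. 0 < I m" using pos unfolding I_def by simp
  have riI: "ri < I t" using ri unfolding I_def by simp
  have bij: "bij_betw h {..<stride I t N} (Vs N I t ri)"
    using bij_betw_trans[OF Dg_bij[OF posI] upd_bij[of t N ri I, OF t riI]] unfolding h_def comp_def .
  have kr: "fst (kr_skip A \<sigma> It t N) col c = (\<Prod>j\<in>{..<N}-{t}. A (\<sigma> j) (Dg I t N col j) c)"
    if "col < stride I t N" for col
    using kr_skip_eq[of N It \<sigma> A t c, OF pos] that unfolding I_def by blast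
  have tm: "matricize N I Y t ri col * fst (kr_skip A \<sigma> It t N) col c = g (h col)"
    if "col < stride I t N" for col
  proof -
    have m: "matricize N I Y t ri col = Y (h col)"
      unfolding matricize_def h_def
      by (rule arg_cong[where f = Y]) (auto simp: Dg_def fun_eq_iff)
    have p: "(\<Prod>j\<in>{..<N}-{t}. A (\<sigma> j) (Dg I t N col j) c) = (\<Prod>j\<in>{..<N}-{t}. A (\<sigma> j) (h col j) c)"
      by (rule prod.cong) (simp_all add: h_def)
    show ?thesis unfolding m kr[OF that] p g_def ..
  qed
  have "mttkrp N \<sigma> It A Y t ri c = (\<Sum>col<stride I t N. g (h col))"
    unfolding mttkrp_def I_def[symmetric]
    by (rule sum.cong) (simp_all add: ncols_def stride_def tm[unfolded stride_def])
  also have "\<dots> = sum g (Vs N I t ri)" by (rule sum.reindex_bij_betw[OF bij])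
  finally show ?thesis unfolding g_def I_def .
qed

theorem proposition2:
  fixes N K r :: nat
    and \<sigma> :: "nat \<Rightarrow> nat"
    and It :: "nat \<Rightarrow> nat"
    and A :: "nat \<Rightarrow> nat \<Rightarrow> nat \<Rightarrow> real"
    and Y :: "(nat \<Rightarrow> nat) \<Rightarrow> real"
  assumes cells: "\<forall>n<N. \<sigma> n < K"
    and nonempty: "\<forall>k<K. \<exists>n<N. \<sigma> n = k"
    and pos: "\<forall>k<K. 0 < It k"
    and sym: "partition_symmetric N (\<lambda>n. It (\<sigma> n)) \<sigma> Y"
    and k: "k < K"
    and u: "u < N" "\<sigma> u = k"
    and v: "v < N" "\<sigma> v = k"
  shows "\<forall>ri < It k. \<forall>c < r. mttkrp N \<sigma> It A Y u ri c = mttkrp N \<sigma> It A Y v ri c"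
proof (intro allI impI)
  fix ri c assume ri: "ri < It k" and "c < r"
  define I where "I = (\<lambda>n. It (\<sigma> n))"
  define \<pi> where "\<pi> = Transposition.transpose u v"
  have posN: "\<forall>m<N. 0 < It (\<sigma> m)" using cells pos by auto
  have riu: "ri < It (\<sigma> u)" and riv: "ri < It (\<sigma> v)" using ri u v by auto
  have perm: "\<pi> permutes {..<N}" unfolding \<pi>_def using u v by (intro permutes_swap_id) auto
  have sp: "\<sigma> (\<pi> n) = \<sigma> n" for n
    unfolding \<pi>_def using u v by (cases "n = u"; cases "n = v") auto
  have pin: "\<pi> (\<pi> n) = n" for n unfolding \<pi>_def by simp
  have piN: "n < N \<Longrightarrow> \<pi> n < N" for n
    unfolding \<pi>_def using u v by (cases "n = u"; cases "n = v") auto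
  have piN2: "\<not> n < N \<Longrightarrow> \<pi> n = n" for n
    unfolding \<pi>_def using u v by (cases "n = u"; cases "n = v") auto
  have mapV: "(\<lambda>n. a (\<pi> n)) \<in> Vs N I t ri" if a: "a \<in> Vs N I s ri" and st: "\<pi> t = s" for a s t
  proof -
    have va: "valid_index N I a" "a s = ri" using a unfolding Vs_def by auto
    have "valid_index N I (\<lambda>n. a (\<pi> n))" unfolding valid_index_def
    proof (intro conjI allI impI)
      fix n assume n: "n < N"
      have "a (\<pi> n) < I (\<pi> n)" using va(1) piN[OF n] unfolding valid_index_def by blast
      then show "a (\<pi> n) < I n" unfolding I_def sp .
    next
      fix n assume n: "N \<le> n"
      then have "\<pi> n = n" using piN2 by simp
      then show "a (\<pi> n) = 0" using va(1) n unfolding valid_index_def by simp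
    qed
    then show ?thesis unfolding Vs_def using va(2) st by simp
  qed
  have "mttkrp N \<sigma> It A Y u ri c = (\<Sum>i\<in>Vs N I u ri. Y i * (\<Prod>j\<in>{..<N}-{u}. A (\<sigma> j) (i j) c))"
    unfolding I_def by (rule mttkrp_eq[of u N ri It \<sigma>, OF u(1) riu posN])
  also have "\<dots> = (\<Sum>i\<in>Vs N I v ri. Y i * (\<Prod>j\<in>{..<N}-{v}. A (\<sigma> j) (i j) c))"
  proof (rule sum.reindex_bij_witness[where i = "\<lambda>b n. b (\<pi> n)" and j = "\<lambda>b n. b (\<pi> n)"])
    fix a assume a: "a \<in> Vs N I u ri"
    show "(\<lambda>n. a (\<pi> (\<pi> n))) = a" by (simp add: pin)
    show "(\<lambda>n. a (\<pi> n)) \<in> Vs N I v ri" by (rule mapV[OF a]) (simp add: \<pi>_def)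
    have va: "valid_index N I a" using a unfolding Vs_def by auto
    have Ys: "Y (\<lambda>n. a (\<pi> n)) = Y a"
      using sym perm sp va unfolding partition_symmetric_def I_def by blast
    have img: "\<pi> ` ({..<N} - {v}) = {..<N} - {u}"
    proof -
      have "\<pi> ` ({..<N} - {v}) = \<pi> ` {..<N} - \<pi> ` {v}"
        by (rule image_set_diff) (metis pin injI)
      also have "\<dots> = {..<N} - {u}" using permutes_image[OF perm] by (simp add: \<pi>_def)
      finally show ?thesis .
    qed
    have injp: "inj_on \<pi> ({..<N} - {v})" by (rule inj_on_inverseI[where g = \<pi>]) (simp add: pin)
    have "(\<Prod>j\<in>{..<N}-{u}. A (\<sigma> j) (a j) c) = (\<Prod>j\<in>\<pi> ` ({..<N}-{v}). A (\<sigma> j) (a j) c)"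
      unfolding img ..
    also have "\<dots> = (\<Prod>j\<in>{..<N}-{v}. A (\<sigma> (\<pi> j)) (a (\<pi> j)) c)"
      by (simp add: prod.reindex[OF injp])
    also have "\<dots> = (\<Prod>j\<in>{..<N}-{v}. A (\<sigma> j) (a (\<pi> j)) c)" by (simp only: sp)
    finally show "Y (\<lambda>n. a (\<pi> n)) * (\<Prod>j\<in>{..<N}-{v}. A (\<sigma> j) (a (\<pi> j)) c) =
        Y a * (\<Prod>j\<in>{..<N}-{u}. A (\<sigma> j) (a j) c)" using Ys by simp
  next
    fix b assume b: "b \<in> Vs N I v ri"
    show "(\<lambda>n. b (\<pi> (\<pi> n))) = b" by (simp add: pin)
    show "(\<lambda>n. b (\<pi> n)) \<in> Vs N I u ri" by (rule mapV[OF b]) (simp add: \<pi>_def)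
  qed
  also have "\<dots> = mttkrp N \<sigma> It A Y v ri c"
    unfolding I_def by (rule mttkrp_eq[of v N ri It \<sigma>, OF v(1) riv posN, symmetric])
  finally show "mttkrp N \<sigma> It A Y u ri c = mttkrp N \<sigma> It A Y v ri c" .
qed

end
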